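(* There is a constant $C>0$ depending only on $d$ such that for all $p\in\mathbb{R}^d\setminus\{0\}$ and $t>0$: $H(tp)=tH(p)$; $C^{-1}|p|\le H(p)\le C|p|$; and $\liminf_{q\to p}H(q)\ge H(p)$.
   Context: Discrete Laplacian on $\mathbb{Z}^d$: $\Delta u(x)=\sum_{i=1}^d(u(x+e_i)+u(x-e_i)-2u(x))$. For $p\ne0$, $H(p)=\Delta u_p(0)$ where $u_p:\mathbb{Z}^d\to\mathbb{R}$ is the unique solution of $\Delta u=0$ on $\{p\cdot x>0\}$, $u=0$ on $\{p\cdot x\le0\}$, $\sup_{p\cdot x>0}|u(x)-p\cdot x|<\infty$. *)

theory Defs
  imports "HOL-Analysis.Analysis"
begin

definition unit_vec :: "'d::finite \<Rightarrow> int ^ 'd" where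
  "unit_vec i = (\<chi> j. if j = i then 1 else 0)"

definition dotZ :: "real ^ 'd::finite \<Rightarrow> int ^ 'd \<Rightarrow> real" where
  "dotZ p x = (\<Sum>i\<in>UNIV. p $ i * real_of_int (x $ i))"

definition dlap :: "(int ^ 'd::finite \<Rightarrow> real) \<Rightarrow> int ^ 'd \<Rightarrow> real" where
  "dlap u x = (\<Sum>i\<in>UNIV. u (x + unit_vec i) + u (x - unit_vec i) - 2 * u x)"

definition corrector :: "real ^ 'd::finite \<Rightarrow> (int ^ 'd \<Rightarrow> real) \<Rightarrow> bool" where
  "corrector p u \<longleftrightarrow>
     (\<forall>x. dotZ p x > 0 \<longrightarrow> dlap u x = 0) \<and>
     (\<forall>x. dotZ p x \<le> 0 \<longrightarrow> u x = 0) \<and>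
     (\<exists>B. \<forall>x. dotZ p x > 0 \<longrightarrow> \<bar>u x - dotZ p x\<bar> \<le> B)"

definition Hfun :: "real ^ 'd::finite \<Rightarrow> real" where
  "Hfun p = dlap (THE u. corrector p u) 0"

end

theory Submission
  imports Defs
begin

definition avgN :: "(int ^ 'd::finite \<Rightarrow> real) \<Rightarrow> int ^ 'd \<Rightarrow> real" where
  "avgN f x = (\<Sum>i\<in>UNIV. f (x + unit_vec i) + f (x - unit_vec i)) / (2 * real CARD('d))"

lemma card_pos_real: "real CARD('d::finite) > 0" by simp
lemma card_nz_real[simp]: "real CARD('d::finite) \<noteq> 0" by simp

lemma dotZ_plus: "dotZ p (x + unit_vec i) = dotZ p x + p $ i"
proof -
  have "dotZ p (x + unit_vec i) = (\<Sum>j\<in>UNIV. p $ j * real_of_int (x $ j) + (if j = i then p $ j else 0))"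
    unfolding dotZ_def unit_vec_def by (intro sum.cong) (auto simp: algebra_simps)
  also have "\<dots> = dotZ p x + p $ i" unfolding dotZ_def by (simp add: sum.distrib)
  finally show ?thesis .
qed

lemma dotZ_minus: "dotZ p (x - unit_vec i) = dotZ p x - p $ i"
proof -
  have "dotZ p (x - unit_vec i) = (\<Sum>j\<in>UNIV. p $ j * real_of_int (x $ j) - (if j = i then p $ j else 0))"
    unfolding dotZ_def unit_vec_def by (intro sum.cong) (auto simp: algebra_simps)
  also have "\<dots> = dotZ p x - p $ i" unfolding dotZ_def by (simp add: sum_subtractf)
  finally show ?thesis .
qed

lemma dotZ_zero[simp]: "dotZ p 0 = 0" unfolding dotZ_def by simp

lemma dotZ_scale: "dotZ (t *\<^sub>R p) x = t * dotZ p x"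
  unfolding dotZ_def by (simp add: sum_distrib_left mult.assoc)

lemma dlap_avg: "dlap u (x :: int ^ 'd::finite) = 2 * real CARD('d) * (avgN u x - u x)"
proof -
  have "dlap u x = (\<Sum>i\<in>(UNIV::'d set). u (x + unit_vec i) + u (x - unit_vec i)) - 2 * real CARD('d) * u x"
    unfolding dlap_def by (simp add: sum_subtractf)
  moreover have "2 * real CARD('d) * (avgN u x - u x) = (\<Sum>i\<in>(UNIV::'d set). u (x + unit_vec i) + u (x - unit_vec i)) - 2 * real CARD('d) * u x"
    unfolding avgN_def using card_pos_real[where 'd='d] by (simp add: right_diff_distrib)
  ultimately show ?thesis by simp
qed

lemma avgN_mono_nb: "(\<And>i. f (x + unit_vec i) \<le> g (x + unit_vec i) \<and> f (x - unit_vec i) \<le> g (x - unit_vec i)) \<Longrightarrow> avgN f x \<le> avgN g x"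
  unfolding avgN_def by (intro divide_right_mono sum_mono add_mono) auto

lemma avgN_mono: "(\<And>y. f y \<le> g y) \<Longrightarrow> avgN f x \<le> avgN g x"
  by (rule avgN_mono_nb) auto

lemma avgN_cong: "(\<And>i. f (x + unit_vec i) = g (x + unit_vec i) \<and> f (x - unit_vec i) = g (x - unit_vec i)) \<Longrightarrow> avgN f x = avgN g x"
  unfolding avgN_def by (intro arg_cong2[where f="(/)"] sum.cong) auto

lemma avgN_const[simp]: "avgN (\<lambda>_. c) (x :: int ^ 'd::finite) = c"
  unfolding avgN_def using card_pos_real[where 'd='d] by simp

lemma avgN_lin: "avgN (\<lambda>y. a * f y + b * g y) x = a * avgN f x + b * avgN g x"
  unfolding avgN_def by (simp add: sum.distrib sum_distrib_left add_divide_distrib algebra_simps)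

lemma avgN_dotZ: "avgN (\<lambda>y. dotZ p y) (x :: int ^ 'd::finite) = dotZ p x"
  unfolding avgN_def dotZ_plus dotZ_minus using card_pos_real[where 'd='d] by simp

lemma avgN_dotZ_sq: "avgN (\<lambda>y. (dotZ p y)\<^sup>2) (x :: int ^ 'd::finite) = (dotZ p x)\<^sup>2 + (\<Sum>i\<in>UNIV. (p $ i)\<^sup>2) / real CARD('d)"
proof -
  have "(\<Sum>i\<in>(UNIV::'d set). (dotZ p x + p $ i)\<^sup>2 + (dotZ p x - p $ i)\<^sup>2) = (\<Sum>i\<in>(UNIV::'d set). 2 * (dotZ p x)\<^sup>2 + 2 * (p $ i)\<^sup>2)"
    by (intro sum.cong) (auto simp: power2_eq_square algebra_simps)
  also have "\<dots> = 2 * real CARD('d) * (dotZ p x)\<^sup>2 + 2 * (\<Sum>i\<in>UNIV. (p $ i)\<^sup>2)"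
    by (simp add: sum.distrib sum_distrib_left)
  finally show ?thesis unfolding avgN_def dotZ_plus dotZ_minus using card_pos_real[where 'd='d]
    by (simp add: field_simps)
qed

lemma avgN_add_const: "avgN (\<lambda>y. f y + c) (x :: int ^ 'd::finite) = avgN f x + c"
  using avgN_lin[of 1 f c "\<lambda>_. 1" x] by simp

lemma nb_bound: "\<bar>p $ i\<bar> \<le> norm p"
  by (rule component_le_norm_cart)

definition Tk :: "real ^ 'd::finite \<Rightarrow> (int ^ 'd \<Rightarrow> real) \<Rightarrow> int ^ 'd \<Rightarrow> real" where
  "Tk p f x = (if dotZ p x > 0 then avgN f x else 0)"

definition lplus :: "real ^ 'd::finite \<Rightarrow> int ^ 'd \<Rightarrow> real" where
  "lplus p x = max (dotZ p x) 0"

definition vseq :: "real ^ 'd::finite \<Rightarrow> nat \<Rightarrow> int ^ 'd \<Rightarrow> real" where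
  "vseq p n = (Tk p ^^ n) (lplus p)"

definition Sbar :: "real ^ 'd::finite \<Rightarrow> int ^ 'd \<Rightarrow> real" where
  "Sbar p x = (if dotZ p x > 0 then dotZ p x + norm p else 0)"

definition U :: "real ^ 'd::finite \<Rightarrow> int ^ 'd \<Rightarrow> real" where
  "U p x = (SUP n. vseq p n x)"

lemma Tk_mono: "(\<And>y. f y \<le> g y) \<Longrightarrow> Tk p f x \<le> Tk p g x"
  unfolding Tk_def using avgN_mono by auto

lemma Tk_pow_mono: "(\<And>y. f y \<le> g y) \<Longrightarrow> (Tk p ^^ n) f x \<le> (Tk p ^^ n) g x"
proof (induction n arbitrary: x)
  case 0 then show ?case by simp
next
  case (Suc n) then show ?case by (simp add: Tk_mono)
qed

lemma lplus_le_T: "lplus p x \<le> Tk p (lplus p) x"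
proof (cases "dotZ p x > 0")
  case True
  have "dotZ p x = avgN (\<lambda>y. dotZ p y) x" by (simp add: avgN_dotZ)
  also have "\<dots> \<le> avgN (lplus p) x" by (rule avgN_mono) (simp add: lplus_def)
  finally show ?thesis using True by (simp add: Tk_def lplus_def)
next
  case False then show ?thesis by (simp add: Tk_def lplus_def)
qed

lemma vseq_Suc: "vseq p (Suc n) x = Tk p (vseq p n) x"
  unfolding vseq_def by simp

lemma vseq_mono: "vseq p n x \<le> vseq p (Suc n) x"
proof -
  have "(Tk p ^^ n) (lplus p) x \<le> (Tk p ^^ n) (Tk p (lplus p)) x"
    by (rule Tk_pow_mono) (rule lplus_le_T)
  then show ?thesis unfolding vseq_def by (simp add: funpow_Suc_right del: funpow.simps)
qed

lemma vseq_incseq: "incseq (\<lambda>n. vseq p n x)"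
  by (rule incseq_SucI) (rule vseq_mono)

lemma T_Sbar: "Tk p (Sbar p) x \<le> Sbar p x"
proof (cases "dotZ p x > 0")
  case True
  have "avgN (Sbar p) x \<le> avgN (\<lambda>y. dotZ p y + norm p) x"
  proof (rule avgN_mono_nb)
    fix i
    have b: "\<bar>p $ i\<bar> \<le> norm p" by (rule nb_bound)
    show "Sbar p (x + unit_vec i) \<le> dotZ p (x + unit_vec i) + norm p \<and>
          Sbar p (x - unit_vec i) \<le> dotZ p (x - unit_vec i) + norm p"
      using True b unfolding Sbar_def dotZ_plus dotZ_minus by auto
  qed
  also have "\<dots> = dotZ p x + norm p" by (simp add: avgN_add_const avgN_dotZ)
  finally show ?thesis using True by (simp add: Tk_def Sbar_def)
next
  case False then show ?thesis by (simp add: Tk_def Sbar_def)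
qed

lemma vseq_le_Sbar: "vseq p n x \<le> Sbar p x"
proof (induction n arbitrary: x)
  case 0 show ?case by (simp add: vseq_def lplus_def Sbar_def)
next
  case (Suc n)
  have "vseq p (Suc n) x = Tk p (vseq p n) x" by (rule vseq_Suc)
  also have "\<dots> \<le> Tk p (Sbar p) x" by (rule Tk_mono) (rule Suc.IH)
  also have "\<dots> \<le> Sbar p x" by (rule T_Sbar)
  finally show ?case .
qed

lemma vseq_bdd: "bdd_above (range (\<lambda>n. vseq p n x))"
  by (rule bdd_aboveI[where M="Sbar p x"]) (auto intro: vseq_le_Sbar)

lemma vseq_U: "(\<lambda>n. vseq p n x) \<longlonglongrightarrow> U p x"
  unfolding U_def by (rule LIMSEQ_incseq_SUP[OF vseq_bdd vseq_incseq])

lemma vseq_le_U: "vseq p n x \<le> U p x"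
  unfolding U_def by (rule cSUP_upper[OF _ vseq_bdd]) simp

lemma U_le_Sbar: "U p x \<le> Sbar p x"
  unfolding U_def by (rule cSUP_least) (auto intro: vseq_le_Sbar)

lemma lplus_le_U: "lplus p x \<le> U p x"
  using vseq_le_U[of p 0 x] by (simp add: vseq_def)

lemma U_fix: "Tk p (U p) x = U p x"
proof (cases "dotZ p x > 0")
  case True
  have "(\<lambda>n. vseq p (Suc n) x) \<longlonglongrightarrow> U p x"
    using vseq_U LIMSEQ_Suc by blast
  moreover have "(\<lambda>n. vseq p (Suc n) x) = (\<lambda>n. avgN (vseq p n) x)"
    using True by (simp add: vseq_Suc Tk_def)
  moreover have "(\<lambda>n. avgN (vseq p n) x) \<longlonglongrightarrow> avgN (U p) x"
    unfolding avgN_def by (intro tendsto_divide tendsto_sum tendsto_add vseq_U tendsto_const) simp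
  ultimately have "avgN (U p) x = U p x" using LIMSEQ_unique by metis
  then show ?thesis using True by (simp add: Tk_def)
next
  case False
  then show ?thesis using U_le_Sbar[of p x] lplus_le_U[of p x]
    by (simp add: Tk_def Sbar_def lplus_def)
qed

lemma U_corrector: "corrector p (U p)"
  unfolding corrector_def
proof (intro conjI allI impI)
  fix x assume h: "dotZ p x > 0"
  then have "avgN (U p) x = U p x" using U_fix[of p x] by (simp add: Tk_def)
  then show "dlap (U p) x = 0" by (simp add: dlap_avg)
next
  fix x assume h: "dotZ p x \<le> 0"
  then show "U p x = 0" using U_le_Sbar[of p x] lplus_le_U[of p x]
    by (simp add: Sbar_def lplus_def)
next
  show "\<exists>B. \<forall>x. dotZ p x > 0 \<longrightarrow> \<bar>U p x - dotZ p x\<bar> \<le> B"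
  proof (intro exI allI impI)
    fix x assume h: "dotZ p x > 0"
    then show "\<bar>U p x - dotZ p x\<bar> \<le> norm p"
      using U_le_Sbar[of p x] lplus_le_U[of p x] by (simp add: Sbar_def lplus_def)
  qed
qed

lemma lemA: fixes z A r :: real assumes h: "\<forall>n::nat. n \<ge> 1 \<longrightarrow> z \<le> A / real n + r" shows "z \<le> r"
proof (rule ccontr)
  assume "\<not> z \<le> r"
  then have e: "z - r > 0" by simp
  obtain n :: nat where n: "max 1 (A / (z - r)) < real n" using reals_Archimedean2 by blast
  then have n1: "n \<ge> 1" and npos: "real n > 0" by auto
  have "A / (z - r) < real n" using n by simp
  then have "A < real n * (z - r)" using e by (simp add: pos_divide_less_eq mult.commute)
  then have "A / real n < z - r" using npos by (simp add: pos_divide_less_eq mult.commute)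
  with h n1 show False by fastforce
qed
lemma lemB: fixes z B a :: real assumes a: "a > 0" and h: "\<forall>L>0. z \<le> B / (L + a)" shows "z \<le> 0"
proof (rule ccontr)
  assume "\<not> z \<le> 0"
  then have z: "z > 0" by simp
  define L where "L = max 1 (B / z)"
  have L: "L > 0" unfolding L_def by simp
  have "B / z < L + a" unfolding L_def using a by linarith
  then have "B < (L + a) * z" using z by (simp add: pos_divide_less_eq)
  then have "B / (L + a) < z" using L a by (simp add: pos_divide_less_eq mult.commute)
  with h L show False by fastforce
qed

definition Sst :: "(int ^ 'd::finite) set \<Rightarrow> (int ^ 'd \<Rightarrow> real) \<Rightarrow> int ^ 'd \<Rightarrow> real" where
  "Sst E f x = (if x \<in> E then avgN f x else f x)"

lemma Sst_pow_mono: "(\<And>y. f y \<le> g y) \<Longrightarrow> (Sst E ^^ n) f x \<le> (Sst E ^^ n) g x"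
proof (induction n arbitrary: x)
  case 0 then show ?case by simp
next
  case (Suc n) then show ?case by (simp add: Sst_def avgN_mono)
qed

lemma Sst_pow_const: "(Sst E ^^ n) (\<lambda>_. c) = (\<lambda>_. c)"
  by (induction n) (auto simp: Sst_def)

lemma Sst_lin: "Sst E (\<lambda>y. a * f y + b * g y) = (\<lambda>x. a * Sst E f x + b * Sst E g x)"
  by (auto simp: Sst_def avgN_lin)

lemma Sst_pow_lin: "(Sst E ^^ n) (\<lambda>y. a * f y + b * g y) = (\<lambda>x. a * (Sst E ^^ n) f x + b * (Sst E ^^ n) g x)"
proof (induction n)
  case 0 then show ?case by simp
next
  case (Suc n) then show ?case by (simp add: Sst_lin)
qed

lemma Sst_pow_fix: "(\<And>x. x \<in> E \<Longrightarrow> avgN f x = f x) \<Longrightarrow> (Sst E ^^ n) f = f"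
proof (induction n)
  case 0 then show ?case by simp
next
  case (Suc n)
  then have "(Sst E ^^ Suc n) f = Sst E f" by simp
  also have "\<dots> = f" using Suc.prems by (auto simp: Sst_def)
  finally show ?case .
qed

lemma harmonic_upper:
  fixes p :: "real ^ 'd::finite" and w :: "int ^ 'd \<Rightarrow> real"
  assumes p: "p \<noteq> 0"
    and harm: "\<And>x. dotZ p x > 0 \<Longrightarrow> avgN w x = w x"
    and zero: "\<And>x. dotZ p x \<le> 0 \<Longrightarrow> w x = 0"
    and bnd: "\<And>x. \<bar>w x\<bar> \<le> M"
  shows "w x \<le> 0"
proof -
  define a where "a = norm p"
  have a: "a > 0" using p unfolding a_def by simp
  have nb: "\<bar>p $ i\<bar> \<le> a" for i unfolding a_def by (rule nb_bound)
  define c where "c = (\<Sum>i\<in>UNIV. (p $ i)\<^sup>2) / real CARD('d)"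
  obtain i0 where i0: "p $ i0 \<noteq> 0" using p by (metis vec_eq_iff zero_index)
  have "(\<Sum>i\<in>UNIV. (p $ i)\<^sup>2) > 0"
    by (rule sum_pos2[where i=i0]) (use i0 in auto)
  then have c: "c > 0" unfolding c_def by simp
  have M: "M \<ge> 0" using bnd[of 0] by simp
  define phi where "phi y = max (dotZ p y) (- a) + a" for y
  have phi_nn: "phi y \<ge> 0" for y unfolding phi_def by simp
  have key: "w x \<le> M * (((L + a)\<^sup>2 / c) / real n) + (M / (L + a)) * phi x"
    if L: "L > 0" and n: "n \<ge> 1" for L n
  proof -
    define E where "E = {y. 0 < dotZ p y \<and> dotZ p y < L}"
    define ind where "ind y = (if y \<in> E then 1 else 0::real)" for y
    define psi where "psi y = (min (max (dotZ p y) (- a)) (L + a))\<^sup>2" for y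
    have nbE: "dotZ p (y + unit_vec i) > - a \<and> dotZ p (y + unit_vec i) < L + a \<and>
               dotZ p (y - unit_vec i) > - a \<and> dotZ p (y - unit_vec i) < L + a" if "y \<in> E" for y i
      using that nb[of i] unfolding E_def dotZ_plus dotZ_minus by auto
    have phi_fix: "(Sst E ^^ k) phi = phi" for k
    proof (rule Sst_pow_fix)
      fix y assume y: "y \<in> E"
      have "avgN phi y = avgN (\<lambda>z. dotZ p z + a) y"
        by (rule avgN_cong) (use nbE[OF y] in \<open>auto simp: phi_def\<close>)
      also have "\<dots> = dotZ p y + a" by (simp add: avgN_add_const avgN_dotZ)
      also have "\<dots> = phi y" using y a unfolding phi_def E_def by auto
      finally show "avgN phi y = phi y" .
    qed
    have Spsi: "Sst E psi = (\<lambda>y. 1 * psi y + c * ind y)"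
    proof
      fix y show "Sst E psi y = 1 * psi y + c * ind y"
      proof (cases "y \<in> E")
        case True
        have "avgN psi y = avgN (\<lambda>z. (dotZ p z)\<^sup>2) y"
          by (rule avgN_cong) (use nbE[OF True] in \<open>auto simp: psi_def\<close>)
        also have "\<dots> = (dotZ p y)\<^sup>2 + c" by (simp add: avgN_dotZ_sq c_def)
        also have "(dotZ p y)\<^sup>2 = psi y" using True a unfolding psi_def E_def by auto
        finally show ?thesis using True by (simp add: Sst_def ind_def)
      next
        case False then show ?thesis by (simp add: Sst_def ind_def)
      qed
    qed
    have psi_iter: "(Sst E ^^ k) psi x = psi x + c * (\<Sum>j<k. (Sst E ^^ j) ind x)" for k
    proof (induction k)
      case 0 then show ?case by simp
    next
      case (Suc k)
      have "(Sst E ^^ Suc k) psi = (Sst E ^^ k) (Sst E psi)" by (simp add: funpow_Suc_right del: funpow.simps)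
      also have "\<dots> = (\<lambda>z. 1 * (Sst E ^^ k) psi z + c * (Sst E ^^ k) ind z)"
        unfolding Spsi by (rule Sst_pow_lin)
      finally show ?case using Suc.IH by (simp add: algebra_simps)
    qed
    have psi_le: "psi y \<le> (L + a)\<^sup>2" for y
    proof -
      have "\<bar>min (max (dotZ p y) (- a)) (L + a)\<bar> \<le> L + a" using a L by auto
      then show ?thesis unfolding psi_def by (metis abs_le_square_iff abs_of_pos add_pos_pos a L)
    qed
    have psi_nn: "psi y \<ge> 0" for y unfolding psi_def by simp
    have "(Sst E ^^ n) psi x \<le> (Sst E ^^ n) (\<lambda>_. (L + a)\<^sup>2) x"
      by (rule Sst_pow_mono) (rule psi_le)
    then have sumb: "c * (\<Sum>j<n. (Sst E ^^ j) ind x) \<le> (L + a)\<^sup>2"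
      using psi_iter[of n] psi_nn[of x] by (simp add: Sst_pow_const)
    have Sind: "Sst E ind y \<le> ind y" for y
    proof (cases "y \<in> E")
      case True
      have "avgN ind y \<le> avgN (\<lambda>_. 1) y" by (rule avgN_mono) (simp add: ind_def)
      then show ?thesis using True by (simp add: Sst_def ind_def)
    qed (simp add: Sst_def)
    have dec: "decseq (\<lambda>k. (Sst E ^^ k) ind x)"
    proof (rule decseq_SucI)
      fix k
      have "(Sst E ^^ k) (Sst E ind) x \<le> (Sst E ^^ k) ind x" by (rule Sst_pow_mono) (rule Sind)
      then show "(Sst E ^^ Suc k) ind x \<le> (Sst E ^^ k) ind x"
        by (simp add: funpow_Suc_right del: funpow.simps)
    qed
    have "(\<Sum>j<n. (Sst E ^^ n) ind x) \<le> (\<Sum>j<n. (Sst E ^^ j) ind x)"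
      by (rule sum_mono) (use dec in \<open>auto simp: decseq_def\<close>)
    then have "real n * (Sst E ^^ n) ind x \<le> (\<Sum>j<n. (Sst E ^^ j) ind x)" by simp
    then have "c * (real n * (Sst E ^^ n) ind x) \<le> (L + a)\<^sup>2"
      using sumb c by (meson mult_left_mono less_imp_le order_trans)
    then have indb: "(Sst E ^^ n) ind x \<le> ((L + a)\<^sup>2 / c) / real n"
      using c n by (simp add: field_simps)
    have wfix: "(Sst E ^^ n) w = w"
      by (rule Sst_pow_fix) (auto simp: E_def intro: harm)
    have wle: "w y \<le> M * ind y + (M / (L + a)) * phi y" for y
    proof (cases "dotZ p y \<le> 0")
      case True then show ?thesis using zero[OF True] M phi_nn[of y] a L
        by (simp add: ind_def)
    next
      case False
      show ?thesis
      proof (cases "y \<in> E")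
        case True
        have "0 \<le> (M / (L + a)) * phi y" using M a L phi_nn[of y] by simp
        then show ?thesis using True bnd[of y] by (simp add: ind_def)
      next
        case nE: False
        then have "dotZ p y \<ge> L" using False unfolding E_def by auto
        then have "phi y \<ge> L + a" unfolding phi_def by simp
        then have "M / (L + a) * phi y \<ge> M / (L + a) * (L + a)" using M a L
          by (intro mult_left_mono) auto
        then have "M / (L + a) * phi y \<ge> M" using a L by simp
        then show ?thesis using nE bnd[of y] by (simp add: ind_def)
      qed
    qed
    have "w x = (Sst E ^^ n) w x" using wfix by simp
    also have "\<dots> \<le> (Sst E ^^ n) (\<lambda>y. M * ind y + (M / (L + a)) * phi y) x"
      by (rule Sst_pow_mono) (rule wle)
    also have "\<dots> = M * (Sst E ^^ n) ind x + (M / (L + a)) * phi x"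
      using Sst_pow_lin[where E=E and n=n and a=M and f=ind and b="M / (L + a)" and g=phi] phi_fix[of n] by simp
    also have "\<dots> \<le> M * (((L + a)\<^sup>2 / c) / real n) + (M / (L + a)) * phi x"
      using mult_left_mono[OF indb M] by simp
    finally show ?thesis by simp
  qed
  have "w x \<le> M * phi x / (L + a)" if L: "L > 0" for L
  proof -
    have "w x \<le> (M * ((L + a)\<^sup>2 / c)) / real n + M * phi x / (L + a)" if "n \<ge> 1" for n
      using key[OF L that] by simp
    then show ?thesis by (intro lemA[where A="M * ((L + a)\<^sup>2 / c)"]) auto
  qed
  then show "w x \<le> 0" by (intro lemB[OF a]) auto
qed

lemma harmonic_zero:
  fixes p :: "real ^ 'd::finite" and w :: "int ^ 'd \<Rightarrow> real"
  assumes p: "p \<noteq> 0"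
    and harm: "\<And>x. dotZ p x > 0 \<Longrightarrow> avgN w x = w x"
    and zero: "\<And>x. dotZ p x \<le> 0 \<Longrightarrow> w x = 0"
    and bnd: "\<And>x. \<bar>w x\<bar> \<le> M"
  shows "w x = 0"
proof -
  have "w x \<le> 0" by (rule harmonic_upper[OF p harm zero bnd])
  moreover have "(\<lambda>y. - w y) x \<le> 0"
  proof (rule harmonic_upper[OF p, where M=M])
    fix y assume "dotZ p y > 0"
    then show "avgN (\<lambda>y. - w y) y = - w y"
      using harm avgN_lin[of "-1" w 0 w y] by simp
  qed (use zero bnd in auto)
  ultimately show ?thesis by simp
qed


lemma dlap_zero_avg: "dlap u (x :: int ^ 'd::finite) = 0 \<Longrightarrow> avgN u x = u x"
  by (simp add: dlap_avg)

lemma corrector_unique: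
  fixes p :: "real ^ 'd::finite"
  assumes p: "p \<noteq> 0" and c1: "corrector p u1" and c2: "corrector p u2"
  shows "u1 = u2"
proof
  fix x
  obtain B1 where B1: "\<And>x. dotZ p x > 0 \<Longrightarrow> \<bar>u1 x - dotZ p x\<bar> \<le> B1" using c1 unfolding corrector_def by blast
  obtain B2 where B2: "\<And>x. dotZ p x > 0 \<Longrightarrow> \<bar>u2 x - dotZ p x\<bar> \<le> B2" using c2 unfolding corrector_def by blast
  have "(\<lambda>y. u1 y - u2 y) x = 0"
  proof (rule harmonic_zero[OF p, where M="\<bar>B1\<bar> + \<bar>B2\<bar>"])
    fix y assume y: "dotZ p y > 0"
    have a1: "avgN u1 y = u1 y" using c1 y unfolding corrector_def by (auto intro: dlap_zero_avg)
    have a2: "avgN u2 y = u2 y" using c2 y unfolding corrector_def by (auto intro: dlap_zero_avg)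
    show "avgN (\<lambda>y. u1 y - u2 y) y = u1 y - u2 y"
      using avgN_lin[of 1 u1 "-1" u2 y] a1 a2 by simp
  next
    fix y assume "dotZ p y \<le> 0"
    then show "u1 y - u2 y = 0" using c1 c2 unfolding corrector_def by auto
  next
    fix y
    show "\<bar>u1 y - u2 y\<bar> \<le> \<bar>B1\<bar> + \<bar>B2\<bar>"
    proof (cases "dotZ p y > 0")
      case True
      then show ?thesis using B1[OF True] B2[OF True] by linarith
    next
      case False
      then show ?thesis using c1 c2 unfolding corrector_def by auto
    qed
  qed
  then show "u1 x = u2 x" by simp
qed

lemma THE_U: "p \<noteq> 0 \<Longrightarrow> (THE u. corrector p u) = U p"
  by (rule the_equality) (auto intro: U_corrector corrector_unique)

lemma U_zero: "U p 0 = 0"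
  using U_le_Sbar[of p 0] lplus_le_U[of p 0] by (simp add: Sbar_def lplus_def)

lemma dlap_at0: "dlap u (0 :: int ^ 'd::finite) = (\<Sum>i\<in>UNIV. u (unit_vec i) + u (- unit_vec i)) - 2 * real CARD('d) * u 0"
  unfolding dlap_def by (simp add: sum_subtractf)

lemma Hfun_eq: "p \<noteq> 0 \<Longrightarrow> Hfun p = (\<Sum>i\<in>UNIV. U p (unit_vec i) + U p (- unit_vec i))"
  unfolding Hfun_def by (simp add: THE_U dlap_at0 U_zero)

lemma dotZ_e: "dotZ p (unit_vec i) = p $ i" "dotZ p (- unit_vec i) = - p $ i"
  using dotZ_plus[of p 0 i] dotZ_minus[of p 0 i] by simp_all

lemma Hfun_hom:
  fixes p :: "real ^ 'd::finite"
  assumes p: "p \<noteq> 0" and t: "t > 0"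
  shows "Hfun (t *\<^sub>R p) = t * Hfun p"
proof -
  have tp: "t *\<^sub>R p \<noteq> 0" using p t by simp
  have pos: "dotZ (t *\<^sub>R p) x > 0 \<longleftrightarrow> dotZ p x > 0" for x
    using t by (simp add: dotZ_scale zero_less_mult_iff)
  have dl: "dlap (\<lambda>y. t * u y) x = t * dlap u x" for u and x :: "int ^ 'd"
    unfolding dlap_def by (simp add: sum_distrib_left algebra_simps)
  have cor: "corrector (t *\<^sub>R p) (\<lambda>x. t * U p x)"
    unfolding corrector_def
  proof (intro conjI allI impI)
    fix x assume "dotZ (t *\<^sub>R p) x > 0"
    then have "dotZ p x > 0" using pos by simp
    then show "dlap (\<lambda>x. t * U p x) x = 0" using U_corrector[of p] unfolding corrector_def dl by simp
  next
    fix x assume "dotZ (t *\<^sub>R p) x \<le> 0"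
    then have "\<not> dotZ p x > 0" using pos by (metis not_less)
    then show "t * U p x = 0" using U_corrector[of p] unfolding corrector_def by simp
  next
    obtain B where B: "\<And>x. dotZ p x > 0 \<Longrightarrow> \<bar>U p x - dotZ p x\<bar> \<le> B"
      using U_corrector[of p] unfolding corrector_def by blast
    show "\<exists>B. \<forall>x. dotZ (t *\<^sub>R p) x > 0 \<longrightarrow> \<bar>t * U p x - dotZ (t *\<^sub>R p) x\<bar> \<le> B"
    proof (intro exI allI impI)
      fix x assume "dotZ (t *\<^sub>R p) x > 0"
      then have "dotZ p x > 0" using pos by simp
      then have "\<bar>U p x - dotZ p x\<bar> \<le> B" by (rule B)
      then have "t * \<bar>U p x - dotZ p x\<bar> \<le> t * B" using t by simp
      then show "\<bar>t * U p x - dotZ (t *\<^sub>R p) x\<bar> \<le> t * B"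
        using t by (simp add: dotZ_scale abs_mult right_diff_distrib[symmetric])
    qed
  qed
  have "(THE u. corrector (t *\<^sub>R p) u) = (\<lambda>x. t * U p x)"
    by (rule the_equality[where P="corrector (t *\<^sub>R p)"]) (auto intro: corrector_unique[OF tp] cor)
  then show ?thesis unfolding Hfun_def using p by (simp add: dl THE_U)
qed

lemma Hfun_lower:
  fixes p :: "real ^ 'd::finite"
  assumes p: "p \<noteq> 0"
  shows "norm p \<le> Hfun p"
proof -
  have "norm p \<le> (\<Sum>i\<in>UNIV. \<bar>p $ i\<bar>)" by (rule norm_le_l1_cart)
  also have "\<dots> = (\<Sum>i\<in>UNIV. lplus p (unit_vec i) + lplus p (- unit_vec i))"
    by (intro sum.cong) (auto simp: lplus_def dotZ_e)
  also have "\<dots> \<le> (\<Sum>i\<in>UNIV. U p (unit_vec i) + U p (- unit_vec i))"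
    by (intro sum_mono add_mono lplus_le_U)
  finally show ?thesis using Hfun_eq[OF p] by simp
qed

lemma Hfun_upper:
  fixes p :: "real ^ 'd::finite"
  assumes p: "p \<noteq> 0"
  shows "Hfun p \<le> 4 * real CARD('d) * norm p"
proof -
  have "(\<Sum>i\<in>UNIV. U p (unit_vec i) + U p (- unit_vec i)) \<le> (\<Sum>i\<in>(UNIV::'d set). 4 * norm p)"
  proof (rule sum_mono)
    fix i
    have b: "\<bar>p $ i\<bar> \<le> norm p" by (rule nb_bound)
    have "U p (unit_vec i) \<le> Sbar p (unit_vec i)" "U p (- unit_vec i) \<le> Sbar p (- unit_vec i)"
      by (rule U_le_Sbar)+
    then show "U p (unit_vec i) + U p (- unit_vec i) \<le> 4 * norm p"
    proof -
      have "Sbar p (unit_vec i) \<le> \<bar>p $ i\<bar> + norm p" "Sbar p (- unit_vec i) \<le> \<bar>p $ i\<bar> + norm p"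
        using b by (auto simp: Sbar_def dotZ_e)
      then show ?thesis using b \<open>U p (unit_vec i) \<le> Sbar p (unit_vec i)\<close> \<open>U p (- unit_vec i) \<le> Sbar p (- unit_vec i)\<close>
        by linarith
    qed
  qed
  then show ?thesis using Hfun_eq[OF p] by simp
qed

definition lscF :: "'a filter \<Rightarrow> ('a \<Rightarrow> real) \<Rightarrow> real \<Rightarrow> bool" where
  "lscF F f a \<longleftrightarrow> (\<forall>y<a. eventually (\<lambda>q. y < f q) F)"

lemma lscF_add: "lscF F f a \<Longrightarrow> lscF F g b \<Longrightarrow> lscF F (\<lambda>q. f q + g q) (a + b)"
  unfolding lscF_def
proof (intro allI impI)
  fix y assume f: "\<forall>y<a. eventually (\<lambda>q. y < f q) F" and g: "\<forall>y<b. eventually (\<lambda>q. y < g q) F"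
    and y: "y < a + b"
  define e where "e = (a + b - y) / 2"
  have "eventually (\<lambda>q. a - e < f q) F" "eventually (\<lambda>q. b - e < g q) F"
    using f g y unfolding e_def by auto
  then show "eventually (\<lambda>q. y < f q + g q) F"
    by eventually_elim (simp add: e_def field_simps)
qed

lemma lscF_sum: "finite A \<Longrightarrow> (\<And>i. i \<in> A \<Longrightarrow> lscF F (f i) (a i)) \<Longrightarrow> lscF F (\<lambda>q. \<Sum>i\<in>A. f i q) (\<Sum>i\<in>A. a i)"
proof (induction A rule: finite_induct)
  case empty then show ?case by (simp add: lscF_def)
next
  case (insert x A) then show ?case by (simp add: lscF_add)
qed

lemma lscF_div: "c > 0 \<Longrightarrow> lscF F f a \<Longrightarrow> lscF F (\<lambda>q. f q / c) (a / c)"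
  unfolding lscF_def
proof (intro allI impI)
  fix y assume c: "c > 0" and f: "\<forall>y<a. eventually (\<lambda>q. y < f q) F" and y: "y < a / c"
  then have "y * c < a" by (simp add: pos_less_divide_eq)
  then have "eventually (\<lambda>q. y * c < f q) F" using f by auto
  then show "eventually (\<lambda>q. y < f q / c) F"
    by eventually_elim (use c in \<open>simp add: pos_less_divide_eq\<close>)
qed

lemma dotZ_tendsto: "((\<lambda>q. dotZ q x) \<longlongrightarrow> dotZ p x) (nhds p)"
  unfolding dotZ_def by (intro tendsto_intros) (simp add: filterlim_ident)

lemma vseq_nn: "vseq q n x \<ge> 0"
proof -
  have "vseq q 0 x \<le> vseq q n x" using vseq_incseq[of q x] by (simp add: incseq_def)
  then show ?thesis by (simp add: vseq_def lplus_def)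
qed

lemma vseq_lsc: "lscF (nhds p) (\<lambda>q. vseq q n x) (vseq p n x)"
proof (induction n arbitrary: x)
  case 0
  have "((\<lambda>q. max (dotZ q x) 0) \<longlongrightarrow> max (dotZ p x) 0) (nhds p)"
    by (intro tendsto_intros dotZ_tendsto)
  then show ?case unfolding lscF_def vseq_def lplus_def by (auto dest: order_tendstoD(1))
next
  case (Suc n)
  show ?case
  proof (cases "dotZ p x > 0")
    case True
    have ev: "eventually (\<lambda>q. dotZ q x > 0) (nhds p)"
      using order_tendstoD(1)[OF dotZ_tendsto True] .
    have "lscF (nhds p) (\<lambda>q. (\<Sum>i\<in>UNIV. vseq q n (x + unit_vec i) + vseq q n (x - unit_vec i)))
             (\<Sum>i\<in>UNIV. vseq p n (x + unit_vec i) + vseq p n (x - unit_vec i))"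
      by (intro lscF_sum lscF_add Suc.IH) auto
    then have "lscF (nhds p) (\<lambda>q. avgN (vseq q n) x) (avgN (vseq p n) x)"
      unfolding avgN_def by (intro lscF_div) auto
    then show ?thesis unfolding lscF_def
    proof (intro allI impI)
      fix y assume h: "\<forall>y<avgN (vseq p n) x. eventually (\<lambda>q. y < avgN (vseq q n) x) (nhds p)"
        and y: "y < vseq p (Suc n) x"
      then have "eventually (\<lambda>q. y < avgN (vseq q n) x) (nhds p)"
        using True by (simp add: vseq_Suc Tk_def)
      with ev show "eventually (\<lambda>q. y < vseq q (Suc n) x) (nhds p)"
        by eventually_elim (simp add: vseq_Suc Tk_def)
    qed
  next
    case False
    then have "vseq p (Suc n) x = 0" by (simp add: vseq_Suc Tk_def)
    show ?thesis unfolding lscF_def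
    proof (intro allI impI always_eventually)
      fix y q assume "y < vseq p (Suc n) x"
      then show "y < vseq q (Suc n) x" using vseq_nn[of q "Suc n" x] \<open>vseq p (Suc n) x = 0\<close> by linarith
    qed
  qed
qed

lemma Hfun_lsc:
  fixes p :: "real ^ 'd::finite"
  assumes p: "p \<noteq> 0"
  shows "Liminf (at p) (\<lambda>q. ereal (Hfun q)) \<ge> ereal (Hfun p)"
  unfolding le_Liminf_iff
proof (intro allI impI)
  fix y assume y: "y < ereal (Hfun p)"
  obtain r :: real where r1: "y < ereal r" and r2: "ereal r < ereal (Hfun p)"
    using ereal_dense2[OF y] by blast
  define hn where "hn q n = (\<Sum>i\<in>UNIV. vseq q n (unit_vec i) + vseq q n (- unit_vec i))" for q :: "real ^ 'd" and n
  have "(\<lambda>n. hn p n) \<longlonglongrightarrow> Hfun p"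
    unfolding hn_def Hfun_eq[OF p] by (intro tendsto_intros vseq_U)
  then have "eventually (\<lambda>n. r < hn p n) sequentially" using r2 by (intro order_tendstoD(1)) auto
  then obtain n where n: "r < hn p n" by (metis eventually_sequentially order_refl)
  have "lscF (nhds p) (\<lambda>q. hn q n) (hn p n)"
    unfolding hn_def by (intro lscF_sum lscF_add vseq_lsc) auto
  then have ev1: "eventually (\<lambda>q. r < hn q n) (nhds p)" using n unfolding lscF_def by auto
  have "eventually (\<lambda>q. q \<in> - {0}) (nhds p)"
    using p by (intro eventually_nhds_in_open) auto
  then have ev2: "eventually (\<lambda>q. q \<noteq> 0) (nhds p)" by simp
  have "eventually (\<lambda>q. y < ereal (Hfun q)) (nhds p)"
    using ev1 ev2
  proof eventually_elim
    case (elim q)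
    have "hn q n \<le> (\<Sum>i\<in>UNIV. U q (unit_vec i) + U q (- unit_vec i))"
      unfolding hn_def by (intro sum_mono add_mono vseq_le_U)
    then have "r < Hfun q" using elim Hfun_eq[of q] by simp
    then show ?case using r1 by (meson ereal_less_eq(3) less_le_trans less_imp_le order.strict_trans1)
  qed
  then show "eventually (\<lambda>q. y < ereal (Hfun q)) (at p)"
    unfolding eventually_at_filter by (rule eventually_mono) auto
qed

theorem mainTheorem4:
  "\<exists>C>0. \<forall>p :: real ^ 'd::finite. p \<noteq> 0 \<longrightarrow>
      (\<forall>t>0. Hfun (t *\<^sub>R p) = t * Hfun p) \<and>
      norm p / C \<le> Hfun p \<and> Hfun p \<le> C * norm p \<and>
      Liminf (at p) (\<lambda>q. ereal (Hfun q)) \<ge> ereal (Hfun p)"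
proof -
  define C where "C = 4 * real CARD('d)"
  have "(1::nat) \<le> CARD('d)" by (simp add: Suc_le_eq)
  then have "(1::real) \<le> real CARD('d)" by simp
  then have C1: "C \<ge> 1" unfolding C_def by linarith
  have "\<forall>p :: real ^ 'd. p \<noteq> 0 \<longrightarrow>
      (\<forall>t>0. Hfun (t *\<^sub>R p) = t * Hfun p) \<and>
      norm p / C \<le> Hfun p \<and> Hfun p \<le> C * norm p \<and>
      Liminf (at p) (\<lambda>q. ereal (Hfun q)) \<ge> ereal (Hfun p)"
  proof (intro allI impI)
    fix p :: "real ^ 'd" assume p: "p \<noteq> 0"
    have "norm p / C \<le> norm p"
      using C1 by (simp add: divide_le_eq mult_le_cancel_left1 mult_right_mono)
    then show "(\<forall>t>0. Hfun (t *\<^sub>R p) = t * Hfun p) \<and>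
      norm p / C \<le> Hfun p \<and> Hfun p \<le> C * norm p \<and>
      Liminf (at p) (\<lambda>q. ereal (Hfun q)) \<ge> ereal (Hfun p)"
      using Hfun_hom[OF p] Hfun_lower[OF p] Hfun_upper[OF p] Hfun_lsc[OF p] unfolding C_def
      by auto
  qed
  moreover have "C > 0" using C1 by simp
  ultimately show ?thesis by blast
qed

end
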